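(* Let $q\in[1,2]$. Let $R\in C^2(\mathbb{R}^n,\mathbb{R})$ be separable, i.e. $R(x)=\sum_{i=1}^n R_i(x_i)$, and inversely $\mu$-coercive for some $\mu>0$, i.e. $x^T\left(\nabla^2_x R(x)\right)^{-1}x\ge \mu\|x\|_{L_2}^2$ for all $x\in\mathbb{R}^n$. Let $f\in C^1(\mathbb{R}^n,\mathbb{R})$ and let $x_t$ be a solution of the steepest mirror flow $$d\,\nabla_x R(x_t) = -\operatorname{sign}(\nabla_x f(x_t))\odot|\nabla_x f(x_t)|^{q-1}\,dt,\qquad x_0=x_{\mathrm{init}}.$$ Assume that the set of minimizers of $f$ in $\operatorname{dom}R$ is non-empty and that there is a constant $B>0$ such that $|\partial_i f(x_t)|\le B$ for all $t>0$ and all $i\in[n]$. Then $t\mapsto f(x_t)$ is non-increasing and $$\int_0^\infty\|\nabla_x f(x_t)\|_{L_2}^2\,dt\le \frac{B^{2-q}\left(f(x_0)-f(x_\infty)\right)}{\mu},$$ where $f(x_\infty):=\lim_{t\to\infty}f(x_t)$. If moreover $f$ is strongly convex, then $\lim_{t\to\infty}x_t=x^*$, where $x^*$ is the unique minimizer of $f$, and the convergence is linear with rate $\mu B^{q-2}\Lambda$, in the sense that $f(x_t)-f(x^* )\le (f(x_0)-f(x^* ))\exp(-\mu B^{q-2}\Lambda t)$, where $\Lambda>0$ is a constant such that $f$ satisfies the Polyak–Łojasiewicz inequality $\tfrac12\|\nabla_x f(x)\|_{L_2}^2\ge\Lambda(f(x)-f(x^* ))$ for all $x$.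
   Context: $\operatorname{sign}$, $|\cdot|$, powers and $\odot$ act entrywise on vectors. $\|\cdot\|_{L_2}$ is the Euclidean norm. The exponent $q$ is the dual exponent of $p$ ($1/p+1/q=1$), so the flow is the $L_p$ steepest mirror flow; $q=2$ is gradient flow and $q=1$ is sign gradient flow. *)

theory Defs
  imports "HOL-Analysis.Analysis"
begin

definition C1_grad :: "(real^'n \<Rightarrow> real) \<Rightarrow> (real^'n \<Rightarrow> real^'n) \<Rightarrow> bool" where
  "C1_grad f g \<longleftrightarrow> (\<forall>x. (f has_derivative (\<lambda>h. g x \<bullet> h)) (at x)) \<and> continuous_on UNIV g"

definition C2_grad_hess :: "(real^'n \<Rightarrow> real) \<Rightarrow> (real^'n \<Rightarrow> real^'n) \<Rightarrow> (real^'n \<Rightarrow> real^'n^'n) \<Rightarrow> bool" where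
  "C2_grad_hess f g H \<longleftrightarrow> (\<forall>x. (f has_derivative (\<lambda>h. g x \<bullet> h)) (at x))
      \<and> (\<forall>x. (g has_derivative (\<lambda>h. H x *v h)) (at x)) \<and> continuous_on UNIV H"

definition separable :: "(real^'n \<Rightarrow> real) \<Rightarrow> bool" where
  "separable R \<longleftrightarrow> (\<exists>Rc :: 'n \<Rightarrow> real \<Rightarrow> real. \<forall>x. R x = (\<Sum>i\<in>UNIV. Rc i (x $ i)))"

definition inversely_coercive :: "real \<Rightarrow> (real^'n \<Rightarrow> real^'n^'n) \<Rightarrow> bool" where
  "inversely_coercive \<mu> H \<longleftrightarrow> (\<forall>x. invertible (H x) \<and> x \<bullet> (matrix_inv (H x) *v x) \<ge> \<mu> * (norm x)\<^sup>2)"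

definition strongly_convex :: "(real^'n \<Rightarrow> real) \<Rightarrow> bool" where
  "strongly_convex f \<longleftrightarrow> (\<exists>m>0. \<forall>x y u. 0 \<le> u \<and> u \<le> 1 \<longrightarrow>
      f (u *\<^sub>R x + (1 - u) *\<^sub>R y) \<le> u * f x + (1 - u) * f y - m / 2 * u * (1 - u) * (norm (x - y))\<^sup>2)"

definition smf_dir :: "real \<Rightarrow> real^'n \<Rightarrow> real^'n" where
  "smf_dir q g = (\<chi> i. - (sgn (g $ i) * \<bar>g $ i\<bar> powr (q - 1)))"

end

theory Submission
  imports Defs
begin


lemma vd_nth:
  fixes f :: "real \<Rightarrow> real^'n"
  shows "(f has_vector_derivative f') F \<Longrightarrow> ((\<lambda>t. f t $ i) has_vector_derivative f' $ i) F"
  unfolding has_vector_derivative_def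
  using bounded_linear.has_derivative[OF bounded_linear_vec_nth, of f "\<lambda>t. t *\<^sub>R f'" F i]
  by simp

lemma vd_vec:
  fixes f :: "real \<Rightarrow> real^'n"
  assumes "\<And>i. ((\<lambda>t. f t $ i) has_vector_derivative f' $ i) (at t within S)"
  shows "(f has_vector_derivative f') (at t within S)"
proof -
  have "\<forall>i\<in>Basis. ((\<lambda>x. f x \<bullet> i) has_derivative (\<lambda>x. (x *\<^sub>R f') \<bullet> i)) (at t within S)"
  proof
    fix b :: "real^'n" assume "b \<in> Basis"
    then obtain i where b: "b = axis i 1" by (auto simp: Basis_vec_def)
    show "((\<lambda>x. f x \<bullet> b) has_derivative (\<lambda>x. (x *\<^sub>R f') \<bullet> b)) (at t within S)"
      using assms[of i] unfolding b has_vector_derivative_def by (simp add: inner_axis)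
  qed
  then show ?thesis unfolding has_vector_derivative_def
    using has_derivative_componentwise_within by blast
qed



lemma line_deriv:
  fixes R :: "real^'n \<Rightarrow> real"
  assumes "(R has_derivative (\<lambda>h. g \<bullet> h)) (at y)"
  shows "((\<lambda>t. R (y + t *\<^sub>R e)) has_real_derivative (g \<bullet> e)) (at 0)"
proof -
  have l: "((\<lambda>t. y + t *\<^sub>R e) has_vector_derivative e) (at 0)"
    by (auto intro!: derivative_eq_intros)
  have "((R \<circ> (\<lambda>t. y + t *\<^sub>R e)) has_vector_derivative (g \<bullet> e)) (at 0)"
    using vector_derivative_diff_chain_within[OF l, of R "\<lambda>h. g \<bullet> h"] assms
    by (simp add: has_derivative_at_withinI)
  then show ?thesis by (simp add: o_def has_real_derivative_iff_has_vector_derivative)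
qed

lemma sep_grad:
  fixes R :: "real^'n \<Rightarrow> real"
  assumes C2: "C2_grad_hess R gradR HR" and sep: "separable R" and eq: "y $ k = y' $ k"
  shows "gradR y $ k = gradR y' $ k"
proof -
  obtain Rc where Rc: "\<And>x. R x = (\<Sum>i\<in>UNIV. Rc i (x $ i))" using sep unfolding separable_def by blast
  define e :: "real^'n" where "e = axis k 1"
  have const: "R (y + t *\<^sub>R e) - R (y' + t *\<^sub>R e) = R y - R y'" for t
  proof -
    have "\<And>j. Rc j ((y + t *\<^sub>R e) $ j) - Rc j ((y' + t *\<^sub>R e) $ j) = Rc j (y $ j) - Rc j (y' $ j)"
      using eq by (auto simp: e_def axis_def)
    then show ?thesis unfolding Rc by (simp add: sum_subtractf[symmetric])
  qed
  have d1: "((\<lambda>t. R (y + t *\<^sub>R e)) has_real_derivative (gradR y \<bullet> e)) (at 0)"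
    using C2 unfolding C2_grad_hess_def by (intro line_deriv) auto
  have d2: "((\<lambda>t. R (y' + t *\<^sub>R e)) has_real_derivative (gradR y' \<bullet> e)) (at 0)"
    using C2 unfolding C2_grad_hess_def by (intro line_deriv) auto
  have "((\<lambda>t. R (y + t *\<^sub>R e) - R (y' + t *\<^sub>R e)) has_real_derivative (gradR y \<bullet> e - gradR y' \<bullet> e)) (at 0)"
    using DERIV_diff[OF d1 d2] .
  moreover have "((\<lambda>t. R (y + t *\<^sub>R e) - R (y' + t *\<^sub>R e)) has_real_derivative 0) (at 0)"
    unfolding const by simp
  ultimately have "gradR y \<bullet> e - gradR y' \<bullet> e = 0" using DERIV_unique by blast
  then show ?thesis by (simp add: e_def inner_axis)
qed

lemma hess_offdiag:
  fixes R :: "real^'n \<Rightarrow> real"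
  assumes C2: "C2_grad_hess R gradR HR" and sep: "separable R" and ab: "a \<noteq> b"
  shows "HR y $ a $ b = 0"
proof -
  define e :: "real^'n" where "e = axis b 1"
  have l: "((\<lambda>t. y + t *\<^sub>R e) has_vector_derivative e) (at 0)"
    by (auto intro!: derivative_eq_intros)
  have "((gradR \<circ> (\<lambda>t. y + t *\<^sub>R e)) has_vector_derivative (HR y *v e)) (at 0)"
    using vector_derivative_diff_chain_within[OF l, of gradR "\<lambda>h. HR y *v h"] C2
    unfolding C2_grad_hess_def by (simp add: has_derivative_at_withinI)
  from vd_nth[OF this, of a]
  have d1: "((\<lambda>t. gradR (y + t *\<^sub>R e) $ a) has_real_derivative (HR y *v e) $ a) (at 0)"
    by (simp add: o_def has_real_derivative_iff_has_vector_derivative)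
  have "\<And>t. gradR (y + t *\<^sub>R e) $ a = gradR y $ a"
    by (rule sep_grad[OF C2 sep]) (use ab in \<open>simp add: e_def axis_def\<close>)
  then have "((\<lambda>t. gradR (y + t *\<^sub>R e) $ a) has_real_derivative 0) (at 0)" by simp
  with d1 have "(HR y *v e) $ a = 0" using DERIV_unique by blast
  then show ?thesis by (simp add: e_def matrix_vector_mult_basis column_def)
qed


lemma diag_mult_nth:
  fixes A :: "real^'n^'n"
  assumes "\<And>a b. a \<noteq> b \<Longrightarrow> A $ a $ b = 0"
  shows "(A *v w) $ k = A $ k $ k * w $ k"
proof -
  have "(A *v w) $ k = (\<Sum>j\<in>UNIV. A $ k $ j * w $ j)" by (simp add: matrix_vector_mult_def)
  also have "\<dots> = (\<Sum>j\<in>{k}. A $ k $ j * w $ j)"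
    by (rule sum.mono_neutral_right) (use assms in auto)
  finally show ?thesis by simp
qed
lemma diag_inv_nz:
  fixes A :: "real^'n^'n"
  assumes "\<And>a b. a \<noteq> b \<Longrightarrow> A $ a $ b = 0" and "invertible A"
  shows "A $ k $ k \<noteq> 0"
proof
  assume h: "A $ k $ k = 0"
  obtain M where M: "A ** M = mat 1" using assms(2) unfolding invertible_def by blast
  have "(A ** M) $ k $ k = (\<Sum>j\<in>UNIV. A $ k $ j * M $ j $ k)" by (simp add: matrix_matrix_mult_def)
  also have "\<dots> = (\<Sum>j\<in>{k}. A $ k $ j * M $ j $ k)"
    by (rule sum.mono_neutral_right) (use assms in auto)
  finally have "(A ** M) $ k $ k = 0" using h by simp
  then show False using M by (simp add: mat_def)
qed

lemma sep_structure:
  fixes R :: "real^'n \<Rightarrow> real"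
  assumes C2: "C2_grad_hess R gradR HR" and sep: "separable R" and mu: "\<mu> > 0"
    and coer: "inversely_coercive \<mu> HR"
  defines "\<phi> \<equiv> \<lambda>k r. gradR (axis k r) $ k" and "h \<equiv> \<lambda>k r. HR (axis k r) $ k $ k"
  shows "gradR y $ k = \<phi> k (y $ k)"
    and "(\<phi> k has_real_derivative h k r) (at r)"
    and "0 < h k r" and "h k r \<le> 1 / \<mu>"
proof -
  show "gradR y $ k = \<phi> k (y $ k)" unfolding \<phi>_def
    by (rule sep_grad[OF C2 sep]) simp
  have ax: "axis k t = t *\<^sub>R axis k (1::real)" for t
    by (simp add: axis_def vec_eq_iff)
  have der: "(\<phi> k has_real_derivative h k t) (at t)" for t
  proof -
    have l: "((\<lambda>t. t *\<^sub>R axis k (1::real)) has_vector_derivative axis k 1) (at t)"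
      by (auto intro!: derivative_eq_intros)
    have "((gradR \<circ> (\<lambda>t. t *\<^sub>R axis k 1)) has_vector_derivative (HR (t *\<^sub>R axis k 1) *v axis k 1)) (at t)"
      using vector_derivative_diff_chain_within[OF l, of gradR "\<lambda>h. HR (t *\<^sub>R axis k 1) *v h"] C2
      unfolding C2_grad_hess_def by (simp add: has_derivative_at_withinI)
    from vd_nth[OF this, of k]
    show ?thesis unfolding \<phi>_def h_def
      by (simp add: o_def has_real_derivative_iff_has_vector_derivative ax[symmetric] matrix_vector_mult_basis column_def)
  qed
  then show "(\<phi> k has_real_derivative h k r) (at r)" .
  have diag: "\<And>y a b. a \<noteq> b \<Longrightarrow> HR y $ a $ b = 0" by (rule hess_offdiag[OF C2 sep])
  have nz: "h k t \<noteq> 0" for t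
    unfolding h_def by (rule diag_inv_nz) (use diag coer in \<open>auto simp: inversely_coercive_def\<close>)
  have bnd: "0 < h k t \<and> h k t \<le> 1 / \<mu>" if t0: "t \<noteq> 0" for t
  proof -
    define z :: "real^'n" where "z = axis k t"
    define w where "w = matrix_inv (HR z) *v z"
    have inv: "invertible (HR z)" and co: "z \<bullet> w \<ge> \<mu> * (norm z)\<^sup>2"
      using coer unfolding inversely_coercive_def w_def by auto
    have "HR z ** matrix_inv (HR z) = mat 1"
      using inv unfolding invertible_def matrix_inv_def by (rule someI_ex[THEN conjunct1])
    then have "HR z *v w = z" unfolding w_def by (simp add: matrix_vector_mul_assoc)
    then have hw: "h k t * w $ k = t"
      using diag_mult_nth[of "HR z" w k] diag unfolding h_def z_def by (metis axis_nth)
    have zw: "z \<bullet> w = t * w $ k" unfolding z_def by (simp add: inner_axis')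
    have nzz: "(norm z)\<^sup>2 = t\<^sup>2" unfolding z_def by (subst ax) simp
    have pos: "t * w $ k \<ge> \<mu> * t\<^sup>2" using co zw nzz by simp
    have tp: "t\<^sup>2 > 0" using t0 by simp
    have "h k t * (t * w $ k) = t\<^sup>2" using hw by (simp add: power2_eq_square algebra_simps)
    then have e1: "h k t * (t * w $ k) = t\<^sup>2" .
    have twp: "t * w $ k > 0" using pos mu tp by (meson less_le_trans mult_pos_pos)
    have hp: "h k t > 0" using e1 twp tp by (metis zero_less_mult_iff order_less_asym)
    have "h k t * (\<mu> * t\<^sup>2) \<le> h k t * (t * w $ k)" using pos hp by simp
    then have "(h k t * \<mu>) * t\<^sup>2 \<le> 1 * t\<^sup>2" using e1 by (simp add: algebra_simps)
    then have "h k t * \<mu> \<le> 1" using tp by (simp only: mult_le_cancel_right)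
    then have "h k t \<le> 1 / \<mu>" using mu by (simp add: field_simps)
    then show ?thesis using hp by simp
  qed
  have "0 < h k r \<and> h k r \<le> 1 / \<mu>"
  proof (cases "r = 0")
    case False then show ?thesis using bnd by blast
  next
    case True
    have "isCont (h k) 0"
    proof -
      have cH: "continuous_on UNIV HR" using C2 unfolding C2_grad_hess_def by simp
      have "continuous_on UNIV (\<lambda>t. HR (t *\<^sub>R axis k 1) $ k $ k)"
        by (intro continuous_intros continuous_on_compose2[OF cH]) (auto intro!: continuous_intros)
      then have "continuous_on UNIV (\<lambda>t. HR (axis k t) $ k $ k)"
        by (subst (asm) ax[symmetric]) 
      then show ?thesis unfolding h_def by (simp add: continuous_on_eq_continuous_at)
    qed
    then have lim: "(h k \<longlongrightarrow> h k 0) (at 0)" by (simp add: isCont_def)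
    have ev: "eventually (\<lambda>t. t \<noteq> 0) (at (0::real))" by (simp add: eventually_at_filter)
    have "h k 0 \<le> 1 / \<mu>"
      by (rule tendsto_upperbound[OF lim]) (use bnd ev in \<open>auto elim: eventually_mono\<close>)
    moreover have "h k 0 \<ge> 0"
      by (rule tendsto_lowerbound[OF lim]) (use ev in \<open>rule eventually_mono, metis bnd less_imp_le, simp\<close>)
    ultimately show ?thesis using nz[of 0] True by simp
  qed
  then show "0 < h k r" "h k r \<le> 1 / \<mu>" by auto
qed



lemma inv_deriv:
  fixes \<phi> h :: "real \<Rightarrow> real"
  assumes d: "\<And>r. (\<phi> has_real_derivative h r) (at r)" and hp: "\<And>r. h r > 0"
  shows "inv \<phi> (\<phi> r) = r" and "(inv \<phi> has_real_derivative inverse (h r)) (at (\<phi> r))"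
proof -
  have sm: "\<phi> a < \<phi> b" if "a < b" for a b
    by (rule DERIV_pos_imp_increasing[OF that]) (use d hp in blast)
  have inj: "inj \<phi>"
    by (rule injI) (metis sm not_less_iff_gr_or_eq)
  then show iv: "inv \<phi> (\<phi> r) = r" by simp
  have cont: "continuous_on UNIV \<phi>"
    using d by (meson DERIV_isCont continuous_at_imp_continuous_on)
  have "(inv \<phi> has_derivative (\<lambda>x. inverse (h r) * x)) (at (\<phi> r))"
    by (rule has_derivative_inverse_strong[of UNIV r \<phi> "inv \<phi>" "\<lambda>x. h r * x"])
      (use cont inj hp d in \<open>auto simp: has_field_derivative_def o_def fun_eq_iff less_imp_neq[symmetric]\<close>)
  then show "(inv \<phi> has_real_derivative inverse (h r)) (at (\<phi> r))"
    by (simp add: has_field_derivative_def)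
qed

lemma exp_lim:
  assumes a: "a > 0" shows "((\<lambda>t::real. K * exp (- a * t)) \<longlongrightarrow> 0) at_top"
proof -
  have "LIM t at_top. a * t :> at_top"
    by (rule filterlim_tendsto_pos_mult_at_top[OF tendsto_const a filterlim_ident])
  then have "LIM t at_top. - (a * t) :> at_bot" by (simp add: filterlim_uminus_at_top)
  then have "((\<lambda>t. exp (- (a * t))) \<longlongrightarrow> 0) at_top"
    by (rule filterlim_compose[OF exp_at_bot])
  then have "((\<lambda>t. K * exp (- (a * t))) \<longlongrightarrow> K * 0) at_top"
    by (intro tendsto_mult tendsto_const)
  then show ?thesis by simp
qed

lemma at_within_pos: "(t::real) > 0 \<Longrightarrow> at t within {0..} = at t"
  by (rule at_within_interior) simp



lemma path_deriv:
  fixes x :: "real \<Rightarrow> real^'n" and \<phi> h :: "'n \<Rightarrow> real \<Rightarrow> real"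
  assumes gR: "\<And>y k. gradR y $ k = \<phi> k (y $ k)"
    and d\<phi>: "\<And>k r. (\<phi> k has_real_derivative h k r) (at r)" and hp: "\<And>k r. h k r > 0"
    and flow: "((\<lambda>s. gradR (x s)) has_vector_derivative v) (at t within S)"
  shows "(x has_vector_derivative (\<chi> k. v $ k / h k (x t $ k))) (at t within S)"
proof (rule vd_vec)
  fix k
  have y: "((\<lambda>s. \<phi> k (x s $ k)) has_vector_derivative v $ k) (at t within S)"
    using vd_nth[OF flow, of k] by (simp add: gR)
  have dpsi: "(inv (\<phi> k) has_real_derivative inverse (h k (x t $ k))) (at (\<phi> k (x t $ k)) within (\<lambda>s. \<phi> k (x s $ k)) ` S)"
    using inv_deriv(2)[OF d\<phi> hp] by (rule has_field_derivative_at_within)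
  have "((inv (\<phi> k) \<circ> (\<lambda>s. \<phi> k (x s $ k))) has_vector_derivative (v $ k * inverse (h k (x t $ k)))) (at t within S)"
    using field_vector_diff_chain_within[OF y dpsi] by simp
  moreover have "(inv (\<phi> k) \<circ> (\<lambda>s. \<phi> k (x s $ k))) = (\<lambda>s. x s $ k)"
    using inv_deriv(1)[OF d\<phi> hp] by (simp add: o_def)
  ultimately show "((\<lambda>s. x s $ k) has_vector_derivative (\<chi> k. v $ k / h k (x t $ k)) $ k) (at t within S)"
    by (simp add: divide_inverse)
qed

lemma f_deriv:
  fixes x :: "real \<Rightarrow> real^'n"
  assumes f: "C1_grad f gradf" and dx: "(x has_vector_derivative w) (at t within S)"
  shows "((\<lambda>s. f (x s)) has_real_derivative (gradf (x t) \<bullet> w)) (at t within S)"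
proof -
  have "(f has_derivative (\<lambda>h. gradf (x t) \<bullet> h)) (at (x t) within x ` S)"
    using f unfolding C1_grad_def by (simp add: has_derivative_at_withinI)
  from vector_derivative_diff_chain_within[OF dx this]
  show ?thesis by (simp add: o_def has_real_derivative_iff_has_vector_derivative)
qed

lemma term_nonpos:
  fixes g hh q :: real assumes "hh > 0"
  shows "g * (- (sgn g * \<bar>g\<bar> powr (q - 1)) / hh) \<le> 0"
proof -
  have "g * sgn g \<ge> 0" by (cases g "0::real" rule: linorder_cases) auto
  then have "g * (sgn g * \<bar>g\<bar> powr (q - 1)) \<ge> 0" by (metis mult.assoc mult_nonneg_nonneg powr_ge_zero)
  then show ?thesis using assms by (simp add: divide_nonpos_pos)
qed

lemma term_bound:
  fixes g hh q \<mu> B :: real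
  assumes h: "hh > 0" "hh \<le> 1 / \<mu>" and mu: "\<mu> > 0" and q: "1 \<le> q" "q \<le> 2"
    and gB: "\<bar>g\<bar> \<le> B"
  shows "g * (- (sgn g * \<bar>g\<bar> powr (q - 1)) / hh) \<le> - (\<mu> * B powr (q - 2)) * g\<^sup>2"
proof (cases "g = 0")
  case True then show ?thesis by simp
next
  case False
  define a where "a = \<bar>g\<bar>"
  have a: "a > 0" using False a_def by simp
  have gs: "g * sgn g = a" unfolding a_def by (cases g "0::real" rule: linorder_cases) auto
  have "g * (sgn g * \<bar>g\<bar> powr (q - 1)) = a * a powr (q - 1)" using gs a_def by (simp add: mult.assoc[symmetric])
  also have "\<dots> = a powr q" using a by (simp add: powr_mult_base)
  also have "\<dots> = a powr 2 * a powr (q - 2)" by (simp flip: powr_add)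
  also have "\<dots> = a\<^sup>2 * a powr (q - 2)" using powr_numeral[of a "num.Bit0 num.One"] a by simp
  finally have e: "g * (sgn g * \<bar>g\<bar> powr (q - 1)) = a\<^sup>2 * a powr (q - 2)" .
  have pm: "a powr (q - 2) \<ge> B powr (q - 2)"
    using powr_mono2'[of "q - 2" a B] q gB a a_def by simp
  have ih: "1 / hh \<ge> \<mu>" using h mu by (simp add: field_simps)
  have "\<mu> * B powr (q - 2) * g\<^sup>2 = \<mu> * (a\<^sup>2 * B powr (q - 2))" unfolding a_def by simp
  also have "\<dots> \<le> (1 / hh) * (a\<^sup>2 * a powr (q - 2))"
    by (rule mult_mono) (use ih pm mu h in \<open>auto intro: mult_left_mono\<close>)
  also have "\<dots> = g * (sgn g * \<bar>g\<bar> powr (q - 1)) / hh" using e by simp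
  finally show ?thesis by simp
qed



lemma F_cont:
  fixes F D :: "real \<Rightarrow> real"
  assumes dF: "\<And>t. t \<ge> 0 \<Longrightarrow> (F has_real_derivative D t) (at t within {0..})"
  shows "continuous_on {0..} F"
  unfolding continuous_on_eq_continuous_within
proof
  fix t :: real assume "t \<in> {0..}"
  then show "continuous (at t within {0..}) F" using DERIV_continuous[OF dF[of t]] by simp
qed

lemma F_mono:
  fixes F D :: "real \<Rightarrow> real"
  assumes dF: "\<And>t. t \<ge> 0 \<Longrightarrow> (F has_real_derivative D t) (at t within {0..})"
    and Dle: "\<And>t. t > 0 \<Longrightarrow> D t \<le> 0"
    and st: "0 \<le> s" "s \<le> t"
  shows "F t \<le> F s"
proof (rule DERIV_nonpos_imp_decreasing_open[OF st(2)])
  show "continuous_on {s..t} F"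
    by (rule continuous_on_subset[OF F_cont[OF dF]]) (use st in auto)
  fix r assume r: "s < r" "r < t"
  then have "(F has_real_derivative D r) (at r)" using dF[of r] st at_within_pos[of r] by simp
  then show "\<exists>y. (F has_real_derivative y) (at r) \<and> y \<le> 0" using Dle[of r] r st by auto
qed

lemma F_integral:
  fixes F D G :: "real \<Rightarrow> real"
  assumes dF: "\<And>t. t \<ge> 0 \<Longrightarrow> (F has_real_derivative D t) (at t within {0..})"
    and Dle: "\<And>t. t > 0 \<Longrightarrow> D t \<le> - c * G t"
    and c: "c > 0" and G0: "\<And>t. G t \<ge> 0" and Gc: "continuous_on {0..} G"
    and T: "T \<ge> 0"
  shows "F T + c * integral {0..T} G \<le> F 0"
proof -
  have GcT: "continuous_on {0..T} G" by (rule continuous_on_subset[OF Gc]) auto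
  have "F 0 + c * integral {0..0} G \<ge> F T + c * integral {0..T} G"
  proof (rule DERIV_nonpos_imp_decreasing_open[OF T, of "\<lambda>t. F t + c * integral {0..t} G"])
    show "continuous_on {0..T} (\<lambda>t. F t + c * integral {0..t} G)"
    proof (intro continuous_intros)
      show "continuous_on {0..T} F" by (rule continuous_on_subset[OF F_cont[OF dF]]) auto
      show "continuous_on {0..T} (\<lambda>t. integral {0..t} G)"
        by (rule indefinite_integral_continuous_1, rule integrable_continuous_real, rule GcT)
    qed
    fix r assume r: "0 < r" "r < T"
    have d1: "(F has_real_derivative D r) (at r)" using dF[of r] r at_within_pos[of r] by simp
    have "((\<lambda>u. integral {0..u} G) has_vector_derivative G r) (at r within {0..T})"
      by (rule integral_has_vector_derivative[OF GcT]) (use r in auto)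
    moreover have "at r within {0..T} = at r" by (rule at_within_interior) (use r in simp)
    ultimately have d2: "((\<lambda>u. integral {0..u} G) has_real_derivative G r) (at r)"
      by (simp add: has_real_derivative_iff_has_vector_derivative)
    have "((\<lambda>t. F t + c * integral {0..t} G) has_real_derivative D r + c * G r) (at r)"
      by (intro DERIV_add DERIV_cmult d1 d2)
    moreover have "D r + c * G r \<le> 0" using Dle[of r] r by simp
    ultimately show "\<exists>y. ((\<lambda>t. F t + c * integral {0..t} G) has_real_derivative y) (at r) \<and> y \<le> 0"
      by blast
  qed
  then show ?thesis by simp
qed

lemma F_limit:
  fixes F :: "real \<Rightarrow> real"
  assumes mono: "\<And>s t. 0 \<le> s \<Longrightarrow> s \<le> t \<Longrightarrow> F t \<le> F s"
    and lb: "\<And>t. F t \<ge> m"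
  shows "(F \<longlongrightarrow> Inf (F ` {0..})) at_top"
proof (rule decreasing_tendsto)
  have bdd: "bdd_below (F ` {0..})" using lb by (intro bdd_belowI[of _ m]) auto
  show "\<forall>\<^sub>F n in at_top. Inf (F ` {0..}) \<le> F n"
    using eventually_ge_at_top[of 0] by eventually_elim (use bdd in \<open>auto intro: cInf_lower\<close>)
  fix a assume "Inf (F ` {0..}) < a"
  then obtain t0 where t0: "t0 \<ge> 0" "F t0 < a" by (subst (asm) cInf_less_iff) (use bdd in auto)
  show "\<forall>\<^sub>F n in at_top. F n < a"
    using eventually_ge_at_top[of t0] by eventually_elim (use t0 mono in \<open>fastforce intro: le_less_trans\<close>)
qed

lemma F_main:
  fixes F D G :: "real \<Rightarrow> real"
  assumes dF: "\<And>t. t \<ge> 0 \<Longrightarrow> (F has_real_derivative D t) (at t within {0..})"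
    and Dle: "\<And>t. t > 0 \<Longrightarrow> D t \<le> - c * G t"
    and c: "c > 0" and G0: "\<And>t. G t \<ge> 0" and Gc: "continuous_on {0..} G"
    and lb: "\<And>t. F t \<ge> m"
  shows "(\<forall>s t. 0 \<le> s \<and> s \<le> t \<longrightarrow> F t \<le> F s)
     \<and> (\<exists>L I. (F \<longlongrightarrow> L) at_top \<and> (G has_integral I) {0..} \<and> I \<le> (F 0 - L) / c)"
proof -
  have Dle0: "D t \<le> 0" if "t > 0" for t
  proof -
    have "c * G t \<ge> 0" using G0[of t] c by simp
    then show ?thesis using Dle[OF that] by linarith
  qed
  have mono: "\<And>s t. 0 \<le> s \<Longrightarrow> s \<le> t \<Longrightarrow> F t \<le> F s" by (rule F_mono[OF dF Dle0])
  define L where "L = Inf (F ` {0..})"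
  have lim: "(F \<longlongrightarrow> L) at_top" unfolding L_def by (rule F_limit[OF mono lb])
  have FL: "L \<le> F T" if "T \<ge> 0" for T
  proof (rule tendsto_upperbound[OF lim])
    show "\<forall>\<^sub>F x in at_top. F x \<le> F T"
      using eventually_ge_at_top[of T] by eventually_elim (use mono that in auto)
  qed simp
  have Ib: "integral {0..T} G \<le> (F 0 - L) / c" if "T \<ge> 0" for T
    using F_integral[OF dF Dle c G0 Gc that] FL[OF that] c by (simp add: field_simps)
  have I0: "integral {0..T} G \<ge> 0" for T
  proof (rule integral_nonneg)
    show "G integrable_on {0..T}"
      by (rule integrable_continuous_real, rule continuous_on_subset[OF Gc]) auto
  qed (use G0 in auto)
  define fk where "fk = (\<lambda>k::nat. \<lambda>x. if x \<in> {0..real k} then G x else 0)"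
  have fk_int: "integral {0..} (fk k) = integral {0..real k} G" for k
    unfolding fk_def integral_restrict_Int by (simp add: Int_absorb2)
  have "G integrable_on {0..} \<and> ((\<lambda>k. integral {0..} (fk k)) \<longlongrightarrow> integral {0..} G) sequentially"
  proof (rule monotone_convergence_increasing)
    show "fk k integrable_on {0..}" for k
    proof -
      have e: "{0..real k} \<inter> {0..} = {0..real k}" by auto
      show ?thesis unfolding fk_def integrable_restrict_Int e
        by (rule integrable_continuous_real, rule continuous_on_subset[OF Gc]) auto
    qed
    show "fk k x \<le> fk (Suc k) x" if "x \<in> {0..}" for k x
      unfolding fk_def using G0[of x] by auto
    show "(\<lambda>k. fk k x) \<longlonglongrightarrow> G x" if "x \<in> {0..}" for x
    proof (rule tendsto_eventually)
      obtain N :: nat where "x \<le> real N" using real_arch_simple by blast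
      then show "\<forall>\<^sub>F k in sequentially. fk k x = G x"
        unfolding eventually_sequentially fk_def using that by (intro exI[of _ N]) auto
    qed
    show "bounded (range (\<lambda>k. integral {0..} (fk k)))"
      unfolding bounded_real fk_int using Ib I0 by (intro exI[of _ "(F 0 - L) / c"]) auto
  qed
  then have Gi: "G integrable_on {0..}" and Gl: "(\<lambda>k. integral {0..real k} G) \<longlonglongrightarrow> integral {0..} G"
    using fk_int by auto
  have "integral {0..} G \<le> (F 0 - L) / c"
    by (rule tendsto_upperbound[OF Gl]) (use Ib in auto)
  then show ?thesis using mono lim Gi by (blast intro: integrable_integral)
qed



lemma F_exp:
  fixes F D G :: "real \<Rightarrow> real"
  assumes dF: "\<And>t. t \<ge> 0 \<Longrightarrow> (F has_real_derivative D t) (at t within {0..})"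
    and Dle: "\<And>t. t > 0 \<Longrightarrow> D t \<le> - c * G t"
    and c: "c > 0" and L: "\<Lambda> > 0"
    and PL: "\<And>t. G t \<ge> 2 * \<Lambda> * (F t - fs)"
    and Ffs: "\<And>t. F t \<ge> fs"
    and t: "t \<ge> 0"
  shows "F t - fs \<le> (F 0 - fs) * exp (- (c * \<Lambda>) * t)"
proof -
  define E where "E = (\<lambda>t. (F t - fs) * exp (c * \<Lambda> * t))"
  have "E t \<le> E 0"
  proof (rule DERIV_nonpos_imp_decreasing_open[OF t, of E])
    show "continuous_on {0..t} E" unfolding E_def
    proof (intro continuous_intros)
      show "continuous_on {0..t} F" by (rule continuous_on_subset[OF F_cont[OF dF]]) auto
    qed
    fix r assume r: "0 < r" "r < t"
    have d1: "(F has_real_derivative D r) (at r)" using dF[of r] r at_within_pos[of r] by simp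
    have d2: "((\<lambda>t. exp (c * \<Lambda> * t)) has_real_derivative exp (c * \<Lambda> * r) * (c * \<Lambda>)) (at r)"
      by (rule derivative_eq_intros refl | simp)+
    have "(E has_real_derivative D r * exp (c * \<Lambda> * r) + (F r - fs) * (exp (c * \<Lambda> * r) * (c * \<Lambda>))) (at r)"
      unfolding E_def using DERIV_mult[OF DERIV_diff[OF d1 DERIV_const[of fs]] d2] by (simp add: mult_ac)
    moreover have "D r * exp (c * \<Lambda> * r) + (F r - fs) * (exp (c * \<Lambda> * r) * (c * \<Lambda>)) \<le> 0"
    proof -
      have a: "c * G r \<ge> c * (2 * \<Lambda> * (F r - fs))" using PL[of r] c by (intro mult_left_mono) auto
      have b: "c * \<Lambda> * (F r - fs) \<ge> 0" using c L Ffs[of r] by simp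
      have "D r + c * \<Lambda> * (F r - fs) \<le> 0" using Dle[of r] r a b by (simp add: algebra_simps)
      then have "exp (c * \<Lambda> * r) * (D r + c * \<Lambda> * (F r - fs)) \<le> 0"
        by (intro mult_nonneg_nonpos) auto
      then show ?thesis by (simp add: algebra_simps)
    qed
    ultimately show "\<exists>y. (E has_real_derivative y) (at r) \<and> y \<le> 0" by blast
  qed
  then have "(F t - fs) * exp (c * \<Lambda> * t) \<le> F 0 - fs" unfolding E_def by simp
  then have "(F t - fs) * exp (c * \<Lambda> * t) * exp (- (c * \<Lambda>) * t) \<le> (F 0 - fs) * exp (- (c * \<Lambda>) * t)"
    by (intro mult_right_mono) auto
  moreover have "(F t - fs) * exp (c * \<Lambda> * t) * exp (- (c * \<Lambda>) * t) = F t - fs"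
    by (simp add: mult.assoc flip: exp_add)
  ultimately show ?thesis by linarith
qed

lemma sc_unique:
  fixes f :: "real^'n \<Rightarrow> real"
  assumes sc: "strongly_convex f" and a: "\<forall>y. f a \<le> f y" and b: "\<forall>y. f b \<le> f y"
  shows "a = b"
proof -
  obtain m where m: "m > 0" and H: "\<And>x y u. 0 \<le> u \<Longrightarrow> u \<le> 1 \<Longrightarrow>
      f (u *\<^sub>R x + (1 - u) *\<^sub>R y) \<le> u * f x + (1 - u) * f y - m / 2 * u * (1 - u) * (norm (x - y))\<^sup>2"
    using sc unfolding strongly_convex_def by blast
  have h: "f ((1/2) *\<^sub>R a + (1 - 1/2) *\<^sub>R b) \<le> (1/2) * f a + (1 - 1/2) * f b - m / 2 * (1/2) * (1 - 1/2) * (norm (a - b))\<^sup>2"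
    by (rule H) auto
  have "f a = f b" using a b by (meson order_antisym)
  moreover have "f a \<le> f ((1/2) *\<^sub>R a + (1 - 1/2) *\<^sub>R b)" using a by blast
  ultimately have "m / 8 * (norm (a - b))\<^sup>2 \<le> 0" using h by simp
  then have "(norm (a - b))\<^sup>2 \<le> 0" using m by (simp add: mult_le_0_iff)
  then show ?thesis by simp
qed

lemma sc_growth:
  fixes f :: "real^'n \<Rightarrow> real"
  assumes sc: "strongly_convex f" and xs: "\<forall>y. f xs \<le> f y"
  obtains m where "m > 0" "\<And>y. m / 4 * (norm (y - xs))\<^sup>2 \<le> f y - f xs"
proof -
  obtain m where m: "m > 0" and H: "\<And>x y u. 0 \<le> u \<Longrightarrow> u \<le> 1 \<Longrightarrow>
      f (u *\<^sub>R x + (1 - u) *\<^sub>R y) \<le> u * f x + (1 - u) * f y - m / 2 * u * (1 - u) * (norm (x - y))\<^sup>2"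
    using sc unfolding strongly_convex_def by blast
  have "m / 4 * (norm (y - xs))\<^sup>2 \<le> f y - f xs" for y
  proof -
    have h: "f ((1/2) *\<^sub>R y + (1 - 1/2) *\<^sub>R xs) \<le> (1/2) * f y + (1 - 1/2) * f xs - m / 2 * (1/2) * (1 - 1/2) * (norm (y - xs))\<^sup>2"
      by (rule H) auto
    moreover have "f xs \<le> f ((1/2) *\<^sub>R y + (1 - 1/2) *\<^sub>R xs)" using xs by blast
    ultimately show ?thesis by simp
  qed
  then show ?thesis using m that by blast
qed

lemma sc_gradineq:
  fixes f :: "real^'n \<Rightarrow> real"
  assumes sc: "strongly_convex f" and f: "C1_grad f gradf"
  shows "gradf y \<bullet> (xs - y) \<le> f xs - f y"
proof -
  obtain m where m: "m > 0" and H: "\<And>x y u. 0 \<le> u \<Longrightarrow> u \<le> 1 \<Longrightarrow>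
      f (u *\<^sub>R x + (1 - u) *\<^sub>R y) \<le> u * f x + (1 - u) * f y - m / 2 * u * (1 - u) * (norm (x - y))\<^sup>2"
    using sc unfolding strongly_convex_def by blast
  define \<phi> where "\<phi> = (\<lambda>u. f (y + u *\<^sub>R (xs - y)))"
  have conv: "\<phi> u - \<phi> 0 \<le> u * (f xs - f y)" if u: "0 \<le> u" "u \<le> 1" for u
  proof -
    have eq: "u *\<^sub>R xs + (1 - u) *\<^sub>R y = y + u *\<^sub>R (xs - y)" by (simp add: algebra_simps)
    have K: "m / 2 * u * (1 - u) * (norm (xs - y))\<^sup>2 \<ge> 0" using m u by simp
    have p0: "\<phi> 0 = f y" by (simp add: \<phi>_def)
    have pu: "\<phi> u = f (u *\<^sub>R xs + (1 - u) *\<^sub>R y)" by (simp add: \<phi>_def eq)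
    have e1: "(1 - u) * f y = f y - u * f y" "u * (f xs - f y) = u * f xs - u * f y"
      by (simp_all add: algebra_simps)
    show ?thesis using H[OF u, of xs y] K p0 pu e1 by linarith
  qed
  have d: "(\<phi> has_real_derivative gradf y \<bullet> (xs - y)) (at 0)"
    unfolding \<phi>_def by (rule line_deriv) (use f in \<open>auto simp: C1_grad_def\<close>)
  then have "((\<lambda>u. (\<phi> u - \<phi> 0) / (u - 0)) \<longlongrightarrow> gradf y \<bullet> (xs - y)) (at 0)"
    by (simp add: has_field_derivative_iff)
  then have lim: "((\<lambda>u. (\<phi> u - \<phi> 0) / (u - 0)) \<longlongrightarrow> gradf y \<bullet> (xs - y)) (at_right 0)"
    by (rule tendsto_mono[OF at_within_le_at])
  show ?thesis
  proof (rule tendsto_upperbound[OF lim])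
    show "\<forall>\<^sub>F u in at_right 0. (\<phi> u - \<phi> 0) / (u - 0) \<le> f xs - f y"
      unfolding eventually_at_right_field
    proof (intro exI[of _ 1] conjI allI impI)
      fix u :: real assume u: "0 < u" "u < 1"
      then show "(\<phi> u - \<phi> 0) / (u - 0) \<le> f xs - f y"
        using conv[of u] by (simp add: divide_le_eq mult.commute)
    qed simp
  qed simp
qed

lemma sc_PL:
  fixes f :: "real^'n \<Rightarrow> real"
  assumes sc: "strongly_convex f" and f: "C1_grad f gradf" and xs: "\<forall>y. f xs \<le> f y"
  obtains \<Lambda> where "\<Lambda> > 0" "\<And>y. (norm (gradf y))\<^sup>2 / 2 \<ge> \<Lambda> * (f y - f xs)"
proof -
  obtain m where m: "m > 0" and gr: "\<And>y. m / 4 * (norm (y - xs))\<^sup>2 \<le> f y - f xs"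
    using sc_growth[OF sc xs] by blast
  have "(norm (gradf y))\<^sup>2 / 2 \<ge> m / 8 * (f y - f xs)" for y
  proof -
    define a where "a = f y - f xs"
    define G where "G = norm (gradf y)"
    define r where "r = norm (y - xs)"
    have a0: "a \<ge> 0" using xs a_def by simp
    have "a \<le> gradf y \<bullet> (y - xs)"
      using sc_gradineq[OF sc f, of y xs] unfolding a_def
      by (simp add: inner_diff_right)
    also have "\<dots> \<le> G * r" unfolding G_def r_def by (rule norm_cauchy_schwarz)
    finally have aG: "a \<le> G * r" .
    have r2: "r\<^sup>2 \<le> 4 * a / m" using gr[of y] m unfolding a_def r_def by (simp add: field_simps)
    show ?thesis
    proof (cases "a = 0")
      case True then show ?thesis unfolding a_def by simp
    next
      case False
      then have ap: "a > 0" using a0 by simp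
      have "a\<^sup>2 \<le> (G * r)\<^sup>2" using aG a0 by (intro power_mono) auto
      also have "\<dots> = G\<^sup>2 * r\<^sup>2" by (simp add: power_mult_distrib)
      also have "\<dots> \<le> G\<^sup>2 * (4 * a / m)" using r2 by (intro mult_left_mono) auto
      finally have "a * a \<le> a * (4 * G\<^sup>2 / m)" by (simp add: power2_eq_square algebra_simps)
      then have "a \<le> 4 * G\<^sup>2 / m" by (rule mult_left_le_imp_le[OF _ ap])
      then have "m / 8 * a \<le> G\<^sup>2 / 2" using m by (simp add: field_simps)
      then show ?thesis unfolding a_def G_def by simp
    qed
  qed
  moreover have "m / 8 > 0" using m by simp
  ultimately show ?thesis using that by blast
qed



theorem theorem1:
  fixes R :: "real^'n \<Rightarrow> real" and gradR :: "real^'n \<Rightarrow> real^'n" and HR :: "real^'n \<Rightarrow> real^'n^'n"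
    and f :: "real^'n \<Rightarrow> real" and gradf :: "real^'n \<Rightarrow> real^'n"
    and x :: "real \<Rightarrow> real^'n" and q \<mu> B :: real
  assumes q: "1 \<le> q" "q \<le> 2"
    and R_C2: "C2_grad_hess R gradR HR"
    and R_sep: "separable R"
    and mu: "\<mu> > 0"
    and R_coercive: "inversely_coercive \<mu> HR"
    and f_C1: "C1_grad f gradf"
    and flow: "\<And>t. t \<ge> 0 \<Longrightarrow>
        ((\<lambda>s. gradR (x s)) has_vector_derivative smf_dir q (gradf (x t))) (at t within {0..})"
    and minimizer: "\<exists>xm. \<forall>y. f xm \<le> f y"
    and B: "B > 0"
    and bound: "\<And>t i. t > 0 \<Longrightarrow> \<bar>gradf (x t) $ i\<bar> \<le> B"
  shows "(\<forall>s t. 0 \<le> s \<and> s \<le> t \<longrightarrow> f (x t) \<le> f (x s))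
    \<and> (\<exists>L I. ((\<lambda>t. f (x t)) \<longlongrightarrow> L) at_top
          \<and> ((\<lambda>t. (norm (gradf (x t)))\<^sup>2) has_integral I) {0..}
          \<and> I \<le> B powr (2 - q) * (f (x 0) - L) / \<mu>)
    \<and> (strongly_convex f \<longrightarrow>
          (\<exists>!xs. \<forall>y. f xs \<le> f y)
          \<and> (\<forall>xs. (\<forall>y. f xs \<le> f y) \<longrightarrow>
               (x \<longlongrightarrow> xs) at_top
               \<and> (\<forall>\<Lambda>>0. (\<forall>y. (norm (gradf y))\<^sup>2 / 2 \<ge> \<Lambda> * (f y - f xs)) \<longrightarrow>
                    (\<forall>t\<ge>0. f (x t) - f xs \<le> (f (x 0) - f xs) * exp (- \<mu> * B powr (q - 2) * \<Lambda> * t)))))"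
proof -
  define \<phi> where "\<phi> = (\<lambda>k r. gradR (axis k r) $ k)"
  define h where "h = (\<lambda>k r. HR (axis k r) $ k $ k)"
  note SS = sep_structure[OF R_C2 R_sep mu R_coercive]
  have gR: "\<And>y k. gradR y $ k = \<phi> k (y $ k)" unfolding \<phi>_def using SS(1) by simp
  have d\<phi>: "\<And>k r. (\<phi> k has_real_derivative h k r) (at r)" unfolding \<phi>_def h_def using SS(2) by simp
  have hp: "\<And>k r. h k r > 0" unfolding h_def using SS(3) by simp
  have hle: "\<And>k r. h k r \<le> 1 / \<mu>" unfolding h_def using SS(4) by simp
  define w where "w = (\<lambda>t. (\<chi> k. smf_dir q (gradf (x t)) $ k / h k (x t $ k)))"
  have dx: "(x has_vector_derivative w t) (at t within {0..})" if "t \<ge> 0" for t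
    unfolding w_def by (rule path_deriv[OF gR d\<phi> hp flow[OF that]])
  define F where "F = (\<lambda>t. f (x t))"
  define D where "D = (\<lambda>t. gradf (x t) \<bullet> w t)"
  define G where "G = (\<lambda>t. (norm (gradf (x t)))\<^sup>2)"
  define c where "c = \<mu> * B powr (q - 2)"
  have c0: "c > 0" unfolding c_def using mu B by simp
  have dF: "(F has_real_derivative D t) (at t within {0..})" if "t \<ge> 0" for t
    unfolding F_def D_def by (rule f_deriv[OF f_C1 dx[OF that]])
  have Dsum: "D t = (\<Sum>k\<in>UNIV. gradf (x t) $ k * (- (sgn (gradf (x t) $ k) * \<bar>gradf (x t) $ k\<bar> powr (q - 1)) / h k (x t $ k)))" for t
    unfolding D_def w_def smf_dir_def inner_vec_def by simp
  have Gsum: "G t = (\<Sum>k\<in>UNIV. (gradf (x t) $ k)\<^sup>2)" for t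
    unfolding G_def power2_norm_eq_inner inner_vec_def by (simp add: power2_eq_square)
  have Dle: "D t \<le> - c * G t" if "t > 0" for t
  proof -
    have "D t \<le> (\<Sum>k\<in>UNIV. - c * (gradf (x t) $ k)\<^sup>2)"
      unfolding Dsum c_def
      by (rule sum_mono, rule term_bound[OF hp hle mu q bound[OF that]])
    also have "\<dots> = - c * G t" unfolding Gsum by (simp add: sum_distrib_left)
    finally show ?thesis .
  qed
  have xc: "continuous_on {0..} x"
    unfolding continuous_on_eq_continuous_within
  proof
    fix t :: real assume "t \<in> {0..}"
    then show "continuous (at t within {0..}) x" using has_vector_derivative_continuous[OF dx[of t]] by simp
  qed
  have gc: "continuous_on UNIV gradf" using f_C1 unfolding C1_grad_def by simp
  have Gc: "continuous_on {0..} G"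
    unfolding G_def by (intro continuous_intros continuous_on_compose2[OF gc xc]) auto
  have G0: "\<And>t. G t \<ge> 0" unfolding G_def by simp
  obtain xm where xm: "\<forall>y. f xm \<le> f y" using minimizer by blast
  have lb: "\<And>t. F t \<ge> f xm" unfolding F_def using xm by simp
  have main: "(\<forall>s t. 0 \<le> s \<and> s \<le> t \<longrightarrow> F t \<le> F s)
     \<and> (\<exists>L I. (F \<longlongrightarrow> L) at_top \<and> (G has_integral I) {0..} \<and> I \<le> (F 0 - L) / c)"
    by (rule F_main[OF dF Dle c0 G0 Gc lb])
  have cinv: "(F 0 - L) / c = B powr (2 - q) * (F 0 - L) / \<mu>" for L
  proof -
    have "B powr (2 - q) = 1 / B powr (q - 2)"
      using B by (simp add: powr_minus_divide[symmetric])
    then show ?thesis unfolding c_def by simp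
  qed
  have part12: "(\<forall>s t. 0 \<le> s \<and> s \<le> t \<longrightarrow> f (x t) \<le> f (x s))
    \<and> (\<exists>L I. ((\<lambda>t. f (x t)) \<longlongrightarrow> L) at_top
          \<and> ((\<lambda>t. (norm (gradf (x t)))\<^sup>2) has_integral I) {0..}
          \<and> I \<le> B powr (2 - q) * (f (x 0) - L) / \<mu>)"
    using main unfolding F_def G_def cinv[unfolded F_def] by simp
  have expb: "F t - f xs \<le> (F 0 - f xs) * exp (- (c * \<Lambda>) * t)"
    if xs: "\<forall>y. f xs \<le> f y" and L: "\<Lambda> > 0" and PL: "\<forall>y. (norm (gradf y))\<^sup>2 / 2 \<ge> \<Lambda> * (f y - f xs)"
      and t: "t \<ge> 0" for xs \<Lambda> t
  proof (rule F_exp[OF dF Dle c0 L _ _ t])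
    show "G t \<ge> 2 * \<Lambda> * (F t - f xs)" for t using PL[rule_format, of "x t"] unfolding G_def F_def by (simp add: field_simps)
    show "F t \<ge> f xs" for t using xs unfolding F_def by simp
  qed
  have part3: "strongly_convex f \<longrightarrow>
          (\<exists>!xs. \<forall>y. f xs \<le> f y)
          \<and> (\<forall>xs. (\<forall>y. f xs \<le> f y) \<longrightarrow>
               (x \<longlongrightarrow> xs) at_top
               \<and> (\<forall>\<Lambda>>0. (\<forall>y. (norm (gradf y))\<^sup>2 / 2 \<ge> \<Lambda> * (f y - f xs)) \<longrightarrow>
                    (\<forall>t\<ge>0. f (x t) - f xs \<le> (f (x 0) - f xs) * exp (- \<mu> * B powr (q - 2) * \<Lambda> * t))))"
  proof (intro impI conjI allI)
    assume sc: "strongly_convex f"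
    show "\<exists>!xs. \<forall>y. f xs \<le> f y" using xm sc_unique[OF sc] by blast
  next
    fix xs :: "real^'n" and \<Lambda> t :: real
    assume sc: "strongly_convex f" and xs: "\<forall>y. f xs \<le> f y" and L: "\<Lambda> > 0"
      and PL: "\<forall>y. (norm (gradf y))\<^sup>2 / 2 \<ge> \<Lambda> * (f y - f xs)" and t: "t \<ge> 0"
    have e: "exp (- (c * \<Lambda>) * t) = exp (- \<mu> * B powr (q - 2) * \<Lambda> * t)"
      by (rule arg_cong[where f=exp]) (simp add: c_def)
    from expb[OF xs L PL t] have "f (x t) - f xs \<le> (f (x 0) - f xs) * exp (- (c * \<Lambda>) * t)"
      unfolding F_def .
    then show "f (x t) - f xs \<le> (f (x 0) - f xs) * exp (- \<mu> * B powr (q - 2) * \<Lambda> * t)"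
      unfolding e .
  next
    fix xs :: "real^'n" assume sc: "strongly_convex f" and xs: "\<forall>y. f xs \<le> f y"
    obtain \<Lambda>0 where L0: "\<Lambda>0 > 0" and PL0: "\<And>y. (norm (gradf y))\<^sup>2 / 2 \<ge> \<Lambda>0 * (f y - f xs)"
      using sc_PL[OF sc f_C1 xs] by blast
    have Flim: "((\<lambda>t. F t - f xs) \<longlongrightarrow> 0) at_top"
    proof (rule tendsto_sandwich[of "\<lambda>t. 0" _ _ "\<lambda>t. (F 0 - f xs) * exp (- (c * \<Lambda>0) * t)"])
      show "\<forall>\<^sub>F t in at_top. 0 \<le> F t - f xs" using xs unfolding F_def by simp
      show "\<forall>\<^sub>F t in at_top. F t - f xs \<le> (F 0 - f xs) * exp (- (c * \<Lambda>0) * t)"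
        using eventually_ge_at_top[of 0] by eventually_elim (use expb[OF xs L0] PL0 in auto)
      show "((\<lambda>t. (F 0 - f xs) * exp (- (c * \<Lambda>0) * t)) \<longlongrightarrow> 0) at_top"
        by (rule exp_lim) (use c0 L0 in simp)
    qed simp
    obtain m where m: "m > 0" and gr: "\<And>y. m / 4 * (norm (y - xs))\<^sup>2 \<le> f y - f xs"
      using sc_growth[OF sc xs] by blast
    have "((\<lambda>t. norm (x t - xs)) \<longlongrightarrow> 0) at_top"
    proof (rule tendsto_sandwich[of "\<lambda>t. 0" _ _ "\<lambda>t. sqrt (4 * (F t - f xs) / m)"])
      show "\<forall>\<^sub>F t in at_top. 0 \<le> norm (x t - xs)" by simp
      show "\<forall>\<^sub>F t in at_top. norm (x t - xs) \<le> sqrt (4 * (F t - f xs) / m)"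
      proof (rule always_eventually, rule allI, rule real_le_rsqrt)
        fix t
        show "(norm (x t - xs))\<^sup>2 \<le> 4 * (F t - f xs) / m"
          using gr[of "x t"] m unfolding F_def by (simp add: field_simps)
      qed
      have "((\<lambda>t. sqrt (4 * (F t - f xs) / m)) \<longlongrightarrow> sqrt (4 * 0 / m)) at_top"
        by (intro tendsto_intros Flim) (use m in simp)
      then show "((\<lambda>t. sqrt (4 * (F t - f xs) / m)) \<longlongrightarrow> 0) at_top" by simp
    qed simp
    then show "(x \<longlongrightarrow> xs) at_top"
      by (simp add: tendsto_norm_zero_iff LIM_zero_iff)
  qed
  show ?thesis using part12 part3 by blast
qed

end
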